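(* With the setup in the context, suppose $Q>2m$. Let $\varphi_1,\varphi_2$ be unit-norm eigenvectors of $H$ for its two largest eigenvalues $\lambda_1>\lambda_2$, with signs chosen so that $\varphi_1(v_1)\ge0$ and $\varphi_2(v_1)\ge0$. Then $$\varphi_1(v_1)\ \ge\ \sqrt{\tfrac12-\tfrac{m}{2Q^2}}-\sqrt{\tfrac{m}{Q-m}},\qquad \varphi_2(v_1)\ \ge\ \sqrt{\tfrac12-\tfrac{m}{2Q^2}}-\sqrt{\tfrac{m+1}{Q-m-1}}.$$
   Context: $G$ is a finite, simple, connected graph with vertex set $V$, maximum degree $m$, and an involution $\sigma$ (a bijection $V\to V$ with $\sigma\circ\sigma=\mathrm{id}$ such that $x\sim y$ implies $\sigma(x)\sim\sigma(y)$). Fix $v_1\in V$ with $v_1':=\sigma(v_1)\ne v_1$, and let $H=A_G+D_Q$ be the adjacency matrix of $G$ plus the diagonal potential matrix, with potential $Q$ at $v_1$ and $v_1'$ and $0$ elsewhere. For an eigenvector $\varphi$, $\varphi(x)$ denotes its entry at vertex $x$. *)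

theory Defs
  imports Complex_Main
begin

definition simple_graph :: "'a set \<Rightarrow> ('a \<Rightarrow> 'a \<Rightarrow> bool) \<Rightarrow> bool" where
  "simple_graph V E \<longleftrightarrow> finite V \<and> (\<forall>x y. E x y \<longrightarrow> x \<in> V \<and> y \<in> V)
     \<and> (\<forall>x y. E x y \<longrightarrow> E y x) \<and> (\<forall>x. \<not> E x x)"

definition connected_graph :: "'a set \<Rightarrow> ('a \<Rightarrow> 'a \<Rightarrow> bool) \<Rightarrow> bool" where
  "connected_graph V E \<longleftrightarrow> V \<noteq> {} \<and> (\<forall>x\<in>V. \<forall>y\<in>V. E\<^sup>*\<^sup>* x y)"

definition degree :: "'a set \<Rightarrow> ('a \<Rightarrow> 'a \<Rightarrow> bool) \<Rightarrow> 'a \<Rightarrow> nat" where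
  "degree V E x = card {y \<in> V. E x y}"

definition max_degree :: "'a set \<Rightarrow> ('a \<Rightarrow> 'a \<Rightarrow> bool) \<Rightarrow> nat" where
  "max_degree V E = Max (degree V E ` V)"

definition graph_involution :: "'a set \<Rightarrow> ('a \<Rightarrow> 'a \<Rightarrow> bool) \<Rightarrow> ('a \<Rightarrow> 'a) \<Rightarrow> bool" where
  "graph_involution V E \<sigma> \<longleftrightarrow> (\<forall>x\<in>V. \<sigma> x \<in> V \<and> \<sigma> (\<sigma> x) = x)
     \<and> (\<forall>x\<in>V. \<forall>y\<in>V. E x y \<longrightarrow> E (\<sigma> x) (\<sigma> y))"

text \<open>The operator H = A_G + D_Q acting on functions V \<rightarrow> real (values outside V are ignored);
  the potential Q sits on the vertices a and b (= v1 and sigma v1).\<close>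
definition Hop :: "'a set \<Rightarrow> ('a \<Rightarrow> 'a \<Rightarrow> bool) \<Rightarrow> real \<Rightarrow> 'a \<Rightarrow> 'a \<Rightarrow> ('a \<Rightarrow> real) \<Rightarrow> 'a \<Rightarrow> real" where
  "Hop V E Q a b \<phi> x = (\<Sum>y\<in>V. if E x y then \<phi> y else 0) + (if x = a \<or> x = b then Q * \<phi> x else 0)"

definition is_eigenvector :: "'a set \<Rightarrow> ('a \<Rightarrow> 'a \<Rightarrow> bool) \<Rightarrow> real \<Rightarrow> 'a \<Rightarrow> 'a \<Rightarrow> real \<Rightarrow> ('a \<Rightarrow> real) \<Rightarrow> bool" where
  "is_eigenvector V E Q a b lam \<phi> \<longleftrightarrow> (\<exists>x\<in>V. \<phi> x \<noteq> 0) \<and> (\<forall>x\<in>V. Hop V E Q a b \<phi> x = lam * \<phi> x)"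

definition is_eigenvalue :: "'a set \<Rightarrow> ('a \<Rightarrow> 'a \<Rightarrow> bool) \<Rightarrow> real \<Rightarrow> 'a \<Rightarrow> 'a \<Rightarrow> real \<Rightarrow> bool" where
  "is_eigenvalue V E Q a b lam \<longleftrightarrow> (\<exists>\<phi>. is_eigenvector V E Q a b lam \<phi>)"

definition unit_norm :: "'a set \<Rightarrow> ('a \<Rightarrow> real) \<Rightarrow> bool" where
  "unit_norm V \<phi> \<longleftrightarrow> (\<Sum>x\<in>V. (\<phi> x)\<^sup>2) = 1"

end

theory Submission
  imports "HOL-Analysis.Analysis" Defs
begin


definition ip :: "'a set \<Rightarrow> ('a\<Rightarrow>real) \<Rightarrow> ('a\<Rightarrow>real) \<Rightarrow> real" where
  "ip V f g = (\<Sum>x\<in>V. f x * g x)"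
definition mop :: "'a set \<Rightarrow> ('a\<Rightarrow>'a\<Rightarrow>real) \<Rightarrow> ('a\<Rightarrow>real) \<Rightarrow> 'a \<Rightarrow> real" where
  "mop V M f x = (\<Sum>y\<in>V. M x y * f y)"
definition qf :: "'a set \<Rightarrow> ('a\<Rightarrow>'a\<Rightarrow>real) \<Rightarrow> ('a\<Rightarrow>real) \<Rightarrow> real" where
  "qf V M f = ip V f (mop V M f)"

lemma qf_expand: "qf V M f = (\<Sum>x\<in>V. \<Sum>y\<in>V. M x y * f x * f y)"
  unfolding qf_def ip_def mop_def by (simp add: sum_distrib_left algebra_simps)

lemma ip_sym: assumes "\<forall>x y. M x y = M y x"
  shows "ip V f (mop V M g) = ip V (mop V M f) g"
proof -
  have "ip V f (mop V M g) = (\<Sum>x\<in>V. \<Sum>y\<in>V. f x * M x y * g y)"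
    unfolding ip_def mop_def by (simp add: sum_distrib_left algebra_simps)
  also have "\<dots> = (\<Sum>y\<in>V. \<Sum>x\<in>V. f x * M x y * g y)" by (rule sum.swap)
  also have "\<dots> = (\<Sum>y\<in>V. (\<Sum>x\<in>V. M y x * f x) * g y)"
    using assms by (simp add: sum_distrib_right sum_distrib_left algebra_simps)
  also have "\<dots> = ip V (mop V M f) g"
    unfolding ip_def mop_def by simp
  finally show ?thesis .
qed

lemma ip_comm: "ip V f g = ip V g f" unfolding ip_def by (simp add: mult.commute)

lemma ip_nonneg: "ip V f f \<ge> 0" unfolding ip_def by (simp add: sum_nonneg)

lemma ip_zero: assumes "finite V" "ip V f f = 0" "x \<in> V" shows "f x = 0"
proof -
  have "\<forall>x\<in>V. f x * f x = 0" using assms sum_nonneg_eq_0_iff[of V "\<lambda>x. f x * f x"]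
    unfolding ip_def by auto
  thus ?thesis using assms by auto
qed

lemma qf_cong: "(\<And>x. x \<in> V \<Longrightarrow> f x = g x) \<Longrightarrow> qf V M f = qf V M g"
  unfolding qf_expand by (intro sum.cong refl) auto
lemma ip_cong: "(\<And>x. x \<in> V \<Longrightarrow> f x = g x) \<Longrightarrow> ip V f f = ip V g g"
  unfolding ip_def by (intro sum.cong refl) auto

lemma qf_scale: "qf V M (\<lambda>x. c * f x) = c^2 * qf V M f"
  unfolding qf_expand by (simp add: sum_distrib_left power2_eq_square algebra_simps)
lemma ip_scale: "ip V (\<lambda>x. c * f x) (\<lambda>x. c * f x) = c^2 * ip V f f"
  unfolding ip_def by (simp add: sum_distrib_left power2_eq_square algebra_simps)

lemma max_exists:
  assumes fin: "finite V" and ne: "V \<noteq> {}"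
  shows "\<exists>w. ip V w w = 1 \<and> (\<forall>f. qf V M f \<le> qf V M w * ip V f f)"
proof -
  define X where "X = product_topology (\<lambda>_. euclideanreal) V"
  define K where "K = PiE V (\<lambda>_. {-1..1::real})"
  define S where "S = {f \<in> topspace X. ip V f f \<in> {1}} \<inter> K"
  have cip: "continuous_map X euclideanreal (\<lambda>f. ip V f f)"
    unfolding ip_def X_def
    by (intro continuous_intros fin) (auto intro: continuous_map_product_projection)
  have cqf: "continuous_map X euclideanreal (\<lambda>f. qf V M f)"
    unfolding qf_expand X_def
    by (intro continuous_intros fin) (auto intro: continuous_map_product_projection)
  have "compactin X K" unfolding X_def K_def by (simp add: compactin_PiE)
  moreover have "closedin X {f \<in> topspace X. ip V f f \<in> {1}}"
    by (rule closedin_continuous_map_preimage[OF cip]) simp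
  ultimately have "compactin X S" unfolding S_def by (rule closed_Int_compactin[rotated])
  hence "compactin euclideanreal ((\<lambda>f. qf V M f) ` S)" by (rule image_compactin[OF _ cqf])
  hence cS: "compact ((\<lambda>f. qf V M f) ` S)" by simp
  obtain x0 where x0: "x0 \<in> V" using ne by auto
  define e where "e = restrict (\<lambda>x. if x = x0 then 1 else 0::real) V"
  have "ip V e e = (\<Sum>x\<in>V. if x = x0 then 1 else 0)"
    unfolding ip_def e_def by (intro sum.cong refl) auto
  also have "\<dots> = 1" using fin x0 by simp
  finally have "ip V e e = 1" .
  moreover have "e \<in> K" unfolding K_def e_def by auto
  moreover have "e \<in> topspace X" unfolding X_def e_def by auto
  ultimately have "e \<in> S" unfolding S_def by auto
  hence "(\<lambda>f. qf V M f) ` S \<noteq> {}" by auto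
  from compact_attains_sup[OF cS this] obtain w where w: "w \<in> S"
    and wmax: "\<forall>g\<in>S. qf V M g \<le> qf V M w" by auto
  have wip: "ip V w w = 1" using w unfolding S_def by auto
  have "qf V M f \<le> qf V M w * ip V f f" for f
  proof (cases "ip V f f = 0")
    case True
    hence "\<forall>x\<in>V. f x = 0" using ip_zero[OF fin] by auto
    hence "qf V M f = qf V M (\<lambda>x. 0)" by (intro qf_cong) auto
    also have "\<dots> = 0" unfolding qf_expand by simp
    finally show ?thesis using True by simp
  next
    case False
    define n where "n = ip V f f"
    have npos: "n > 0" using False ip_nonneg[of V f] unfolding n_def by auto
    define g where "g = restrict (\<lambda>x. (1 / sqrt n) * f x) V"
    have gip: "ip V g g = 1"
    proof -
      have "ip V g g = ip V (\<lambda>x. (1 / sqrt n) * f x) (\<lambda>x. (1 / sqrt n) * f x)"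
        by (rule ip_cong) (simp add: g_def)
      also have "\<dots> = 1" using npos unfolding ip_scale n_def
        by (simp add: power_divide)
      finally show ?thesis .
    qed
    have "g \<in> K"
    proof -
      have "\<bar>g x\<bar> \<le> 1" if "x \<in> V" for x
      proof -
        have "g x * g x \<le> ip V g g" unfolding ip_def
          by (rule member_le_sum[OF that]) (auto simp: fin)
        hence "(g x)^2 \<le> 1^2" using gip by (simp add: power2_eq_square)
        thus ?thesis using abs_le_square_iff[of "g x" 1] by simp
      qed
      hence "\<And>x. x \<in> V \<Longrightarrow> g x \<in> {-1..1}" by (auto simp: abs_le_iff)
      moreover have "\<And>x. x \<notin> V \<Longrightarrow> g x = undefined" by (simp add: g_def)
      ultimately show ?thesis unfolding K_def by (rule PiE_I)
    qed
    moreover have "g \<in> topspace X" unfolding X_def g_def by auto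
    ultimately have "g \<in> S" using gip unfolding S_def by auto
    hence "qf V M g \<le> qf V M w" using wmax by auto
    moreover have "qf V M g = (1 / sqrt n)^2 * qf V M f"
      by (subst qf_scale[symmetric], rule qf_cong) (simp add: g_def)
    ultimately have "qf V M f / n \<le> qf V M w" using npos by (simp add: power_divide)
    thus ?thesis using npos unfolding n_def[symmetric] by (simp add: divide_le_eq mult.commute)
  qed
  thus ?thesis using wip by blast
qed

lemma mop_lin: "mop V M (\<lambda>x. f x + t * g x) y = mop V M f y + t * mop V M g y"
  unfolding mop_def by (simp add: sum.distrib sum_distrib_left algebra_simps)

lemma qf_add: assumes "\<forall>x y. M x y = M y x"
  shows "qf V M (\<lambda>x. w x + t * z x) = qf V M w + 2 * t * ip V z (mop V M w) + t^2 * qf V M z"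
proof -
  have "qf V M (\<lambda>x. w x + t * z x) = ip V (\<lambda>x. w x + t * z x) (\<lambda>y. mop V M w y + t * mop V M z y)"
    unfolding qf_def mop_lin by simp
  also have "\<dots> = ip V w (mop V M w) + t * ip V w (mop V M z) + t * ip V z (mop V M w) + t^2 * ip V z (mop V M z)"
    unfolding ip_def by (simp add: sum.distrib sum_distrib_left power2_eq_square algebra_simps)
  also have "ip V w (mop V M z) = ip V z (mop V M w)"
    using ip_sym[OF assms, of V w z] ip_comm by metis
  finally show ?thesis unfolding qf_def by simp
qed

lemma ip_add: "ip V (\<lambda>x. w x + t * z x) (\<lambda>x. w x + t * z x) = ip V w w + 2 * t * ip V z w + t^2 * ip V z z"
  unfolding ip_def by (simp add: sum.distrib sum_distrib_left power2_eq_square algebra_simps)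

lemma quad_nonpos: fixes c d :: real assumes "\<And>t. 2 * t * c + t^2 * d \<le> 0" "c \<ge> 0" shows "c = 0"
proof (rule ccontr)
  assume "c \<noteq> 0" hence cp: "c > 0" using assms by auto
  define t where "t = c / (\<bar>d\<bar> + 1)"
  have tp: "t > 0" using cp by (simp add: t_def)
  have "\<bar>d\<bar> / (\<bar>d\<bar> + 1) \<le> 1" by simp
  hence "c * (\<bar>d\<bar> / (\<bar>d\<bar> + 1)) \<le> c * 1" by (rule mult_left_mono) (use cp in simp)
  moreover have "t * \<bar>d\<bar> = c * (\<bar>d\<bar> / (\<bar>d\<bar> + 1))" unfolding t_def by simp
  ultimately have td: "t * \<bar>d\<bar> \<le> c" by simp
  have "t^2 * (- \<bar>d\<bar>) \<le> t^2 * d" by (rule mult_left_mono) auto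
  moreover have "t^2 * \<bar>d\<bar> = t * (t * \<bar>d\<bar>)" by (simp add: power2_eq_square)
  moreover have "t * (t * \<bar>d\<bar>) \<le> t * c" using td tp by simp
  moreover have "t * c > 0" using tp cp by simp
  ultimately have "2 * t * c + t^2 * d > 0" by linarith
  thus False using assms(1)[of t] by simp
qed

lemma maximizer_eig:
  assumes sym: "\<forall>x y. M x y = M y x" and fin: "finite V"
    and mx: "\<forall>f. qf V M f \<le> R * ip V f f" and w: "qf V M w = R * ip V w w"
  shows "\<forall>x\<in>V. mop V M w x = R * w x"
proof -
  define z where "z = (\<lambda>x. mop V M w x - R * w x)"
  have "2 * t * ip V z z + t^2 * (qf V M z - R * ip V z z) \<le> 0" for t
  proof -
    have "qf V M (\<lambda>x. w x + t * z x) \<le> R * ip V (\<lambda>x. w x + t * z x) (\<lambda>x. w x + t * z x)"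
      using mx by blast
    hence "qf V M w + 2 * t * ip V z (mop V M w) + t^2 * qf V M z \<le>
           R * (ip V w w + 2 * t * ip V z w + t^2 * ip V z z)"
      unfolding qf_add[OF sym] ip_add .
    moreover have "ip V z (mop V M w) - R * ip V z w = (\<Sum>x\<in>V. z x * (mop V M w x - R * w x))"
      unfolding ip_def by (simp add: sum_subtractf sum_distrib_left right_diff_distrib mult.left_commute)
    hence P: "ip V z (mop V M w) = ip V z z + R * ip V z w" unfolding ip_def z_def by simp
    have e1: "R * (ip V w w + 2 * t * ip V z w + t^2 * ip V z z) = R * ip V w w + 2 * t * (R * ip V z w) + t^2 * (R * ip V z z)"
      by (simp add: algebra_simps)
    have e2: "2 * t * ip V z (mop V M w) = 2 * t * ip V z z + 2 * t * (R * ip V z w)"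
      unfolding P by (simp add: algebra_simps)
    have e3: "t^2 * (qf V M z - R * ip V z z) = t^2 * qf V M z - t^2 * (R * ip V z z)"
      by (simp add: algebra_simps)
    ultimately show ?thesis using w e1 e2 e3 by linarith
  qed
  hence "ip V z z = 0" using quad_nonpos ip_nonneg by blast
  hence "\<forall>x\<in>V. z x = 0" using ip_zero[OF fin] by blast
  thus ?thesis unfolding z_def by auto
qed



locale gs =
  fixes V :: "'a set" and E :: "'a \<Rightarrow> 'a \<Rightarrow> bool" and Q :: real and a :: 'a and \<sigma> :: "'a \<Rightarrow> 'a"
  assumes fin: "finite V" and Esym: "\<And>x y. E x y \<Longrightarrow> E y x"
    and Ein: "\<And>x y. E x y \<Longrightarrow> x \<in> V \<and> y \<in> V" and Eirr: "\<And>x. \<not> E x x"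
    and aV: "a \<in> V" and ab: "\<sigma> a \<noteq> a" and Qpos: "Q > 0"
    and sV: "\<And>x. x \<in> V \<Longrightarrow> \<sigma> x \<in> V" and ss: "\<And>x. x \<in> V \<Longrightarrow> \<sigma> (\<sigma> x) = x"
    and sE: "\<And>x y. x \<in> V \<Longrightarrow> y \<in> V \<Longrightarrow> E x y \<Longrightarrow> E (\<sigma> x) (\<sigma> y)"
    and conn: "\<And>x y. x \<in> V \<Longrightarrow> y \<in> V \<Longrightarrow> E\<^sup>*\<^sup>* x y"
begin

abbreviation "b \<equiv> \<sigma> a"
abbreviation "m \<equiv> max_degree V E"

definition M :: "'a \<Rightarrow> 'a \<Rightarrow> real" where
  "M x y = (if E x y then 1 else 0) + (if x = y \<and> (x = a \<or> x = b) then Q else 0)"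

lemma bV: "b \<in> V" using sV aV by blast
lemma Eiff: "E x y \<longleftrightarrow> E y x" using Esym by blast

lemma Msym: "\<forall>x y. M x y = M y x" unfolding M_def using Eiff by auto
lemma Mnn: "M x y \<ge> 0" unfolding M_def using Qpos by auto

lemma delta_sum: "x \<in> V \<Longrightarrow> (\<Sum>y\<in>V. (if x = y \<and> P then c * f y else 0)) = (if P then c * f x else 0)"
  using fin by (cases P) auto

lemma Hop_mop: assumes "x \<in> V" shows "Hop V E Q a b f x = mop V M f x"
proof -
  have "mop V M f x = (\<Sum>y\<in>V. (if E x y then f y else 0) + (if x = y \<and> (x = a \<or> x = b) then Q * f y else 0))"
    unfolding mop_def M_def by (intro sum.cong refl) (auto simp: algebra_simps Eirr)
  also have "\<dots> = (\<Sum>y\<in>V. if E x y then f y else 0) + (\<Sum>y\<in>V. (if x = y \<and> (x = a \<or> x = b) then Q * f y else 0))"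
    by (rule sum.distrib)
  also have "(\<Sum>y\<in>V. (if x = y \<and> (x = a \<or> x = b) then Q * f y else 0)) = (if (x = a \<or> x = b) then Q * f x else 0)"
    by (rule delta_sum[OF assms])
  finally show ?thesis unfolding Hop_def by simp
qed

lemma eigvec_iff: "is_eigenvector V E Q a b lam \<phi> \<longleftrightarrow> (\<exists>x\<in>V. \<phi> x \<noteq> 0) \<and> (\<forall>x\<in>V. mop V M \<phi> x = lam * \<phi> x)"
  unfolding is_eigenvector_def using Hop_mop by auto

definition Aq :: "('a \<Rightarrow> real) \<Rightarrow> real" where
  "Aq f = (\<Sum>x\<in>V. \<Sum>y\<in>V. (if E x y then 1 else 0) * f x * f y)"

lemma qf_split: "qf V M f = Aq f + Q * (f a)^2 + Q * (f b)^2"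
proof -
  have "qf V M f = (\<Sum>x\<in>V. (\<Sum>y\<in>V. (if E x y then 1 else 0) * f x * f y) + (\<Sum>y\<in>V. (if x = y \<and> (x = a \<or> x = b) then (Q * f x) * f y else 0)))"
    unfolding qf_expand M_def by (intro sum.cong refl) (auto simp: sum.distrib[symmetric] intro!: sum.cong simp: algebra_simps)
  also have "\<dots> = (\<Sum>x\<in>V. (\<Sum>y\<in>V. (if E x y then 1 else 0) * f x * f y) + (if x = a then Q * (f a)^2 else 0) + (if x = b then Q * (f b)^2 else 0))"
    by (intro sum.cong refl, subst delta_sum) (use ab in \<open>auto simp: power2_eq_square\<close>)
  also have "\<dots> = Aq f + Q * (f a)^2 + Q * (f b)^2"
    unfolding Aq_def sum.distrib using fin aV bV by simp
  finally show ?thesis .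
qed

lemma deg_le: "x \<in> V \<Longrightarrow> degree V E x \<le> m"
  unfolding max_degree_def using fin by (intro Max_ge) auto

lemma deg_sum: "(\<Sum>y\<in>V. if E x y then 1 else 0) = real (degree V E x)"
  unfolding degree_def using fin by (simp add: sum.inter_filter[symmetric])

lemma Aq_abs: "\<bar>Aq f\<bar> \<le> m * ip V f f"
proof -
  have "\<bar>Aq f\<bar> \<le> (\<Sum>x\<in>V. \<Sum>y\<in>V. (if E x y then 1 else 0) * \<bar>f x\<bar> * \<bar>f y\<bar>)"
    unfolding Aq_def
    by (rule order_trans[OF sum_abs], rule sum_mono, rule order_trans[OF sum_abs]) (auto simp: abs_mult)
  also have "\<dots> \<le> (\<Sum>x\<in>V. \<Sum>y\<in>V. (if E x y then 1 else 0) * ((f x)^2 + (f y)^2) / 2)"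
  proof (intro sum_mono)
    fix x y
    have "2 * (\<bar>f x\<bar> * \<bar>f y\<bar>) \<le> (f x)^2 + (f y)^2"
      using sum_squares_bound[of "\<bar>f x\<bar>" "\<bar>f y\<bar>"] by simp
    thus "(if E x y then 1 else 0) * \<bar>f x\<bar> * \<bar>f y\<bar> \<le> (if E x y then 1 else 0) * ((f x)^2 + (f y)^2) / 2"
      by auto
  qed
  also have "\<dots> = ((\<Sum>x\<in>V. \<Sum>y\<in>V. (if E x y then 1 else 0) * (f x)^2) + (\<Sum>x\<in>V. \<Sum>y\<in>V. (if E x y then 1 else 0) * (f y)^2)) / 2"
    by (simp only: distrib_left sum.distrib[symmetric] sum_divide_distrib)
  also have "(\<Sum>x\<in>V. \<Sum>y\<in>V. (if E x y then 1 else 0) * (f y)^2) = (\<Sum>x\<in>V. \<Sum>y\<in>V. (if E x y then 1 else 0) * (f x)^2)"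
    by (subst sum.swap) (simp add: Eiff)
  also have "(\<Sum>x\<in>V. \<Sum>y\<in>V. (if E x y then 1 else 0) * (f x)^2) = (\<Sum>x\<in>V. real (degree V E x) * (f x)^2)"
    by (simp add: sum_distrib_right[symmetric] deg_sum)
  also have "\<dots> \<le> (\<Sum>x\<in>V. real m * (f x)^2)"
    by (intro sum_mono mult_right_mono) (auto simp: deg_le)
  finally show ?thesis unfolding ip_def by (simp add: sum_distrib_left[symmetric] power2_eq_square)
qed

lemma bij_s: "bij_betw \<sigma> V V"
  by (rule bij_betw_byWitness[where f'=\<sigma>]) (auto simp: ss sV)

lemma sum_sigma: "(\<Sum>x\<in>V. h (\<sigma> x)) = (\<Sum>x\<in>V. h x)"
  using sum.reindex_bij_betw[OF bij_s, of h] .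

lemma E_sigma: assumes "x \<in> V" "y \<in> V" shows "E (\<sigma> x) (\<sigma> y) \<longleftrightarrow> E x y"
proof
  assume "E (\<sigma> x) (\<sigma> y)"
  hence "E (\<sigma> (\<sigma> x)) (\<sigma> (\<sigma> y))" using sE sV assms by blast
  thus "E x y" using ss assms by simp
next
  assume "E x y" thus "E (\<sigma> x) (\<sigma> y)" using sE assms by blast
qed

lemma M_sigma: assumes "x \<in> V" "y \<in> V" shows "M (\<sigma> x) (\<sigma> y) = M x y"
proof -
  have s1: "\<sigma> (\<sigma> x) = x" "\<sigma> (\<sigma> y) = y" "\<sigma> (\<sigma> a) = a" using assms ss aV by auto
  have "\<sigma> x = \<sigma> y \<longleftrightarrow> x = y" by (metis s1(1,2))
  moreover have "(\<sigma> x = a \<or> \<sigma> x = b) \<longleftrightarrow> (x = a \<or> x = b)" by (metis s1(1,3))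
  ultimately show ?thesis unfolding M_def using E_sigma[OF assms] by simp
qed

lemma mop_sigma: assumes "x \<in> V" shows "mop V M (\<lambda>y. f (\<sigma> y)) x = mop V M f (\<sigma> x)"
proof -
  have "mop V M f (\<sigma> x) = (\<Sum>y\<in>V. M (\<sigma> x) (\<sigma> y) * f (\<sigma> y))"
    unfolding mop_def using sum_sigma[of "\<lambda>y. M (\<sigma> x) y * f y"] by simp
  also have "\<dots> = mop V M (\<lambda>y. f (\<sigma> y)) x" unfolding mop_def
    using M_sigma[OF assms] by (intro sum.cong refl) auto
  finally show ?thesis by simp
qed

lemma ip_sigma: "ip V (\<lambda>x. f (\<sigma> x)) (\<lambda>x. g (\<sigma> x)) = ip V f g"
  unfolding ip_def using sum_sigma[of "\<lambda>x. f x * g x"] by simp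

lemma zero_prop:
  assumes eig: "\<forall>x\<in>V. mop V M g x = lam * g x" and nn: "\<forall>x\<in>V. g x \<ge> 0"
    and x0: "x0 \<in> V" "g x0 = 0"
  shows "\<forall>x\<in>V. g x = 0"
proof -
  have stp: "z \<in> V \<and> g z = 0" if "y \<in> V" "g y = 0" "E y z" for y z
  proof -
    have zV: "z \<in> V" using Ein that(3) by blast
    have s0: "mop V M g y = 0" using eig that(1,2) by simp
    hence s1: "(\<Sum>z\<in>V. M y z * g z) = 0" by (simp add: mop_def)
    have nn2: "\<forall>z\<in>V. M y z * g z \<ge> 0" using nn Mnn by (meson mult_nonneg_nonneg)
    have "M y z * g z = 0" using sum_nonneg_eq_0_iff[OF fin, of "\<lambda>z. M y z * g z"] nn2 zV s1 by blast
    moreover have "M y z \<ge> 1" using that(3) Qpos unfolding M_def by simp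
    ultimately show ?thesis using zV by simp
  qed
  have "E\<^sup>*\<^sup>* x0 y \<Longrightarrow> y \<in> V \<and> g y = 0" for y
  proof (induction rule: rtranclp_induct)
    case base show ?case using x0 by simp
  next
    case (step y z) thus ?case using stp by blast
  qed
  thus ?thesis using conn x0(1) by blast
qed

lemma mop_scale: "mop V M (\<lambda>x. c * f x) y = c * mop V M f y"
  unfolding mop_def by (simp add: sum_distrib_left algebra_simps)

lemma qf_eig: assumes "\<forall>x\<in>V. mop V M g x = lam * g x" shows "qf V M g = lam * ip V g g"
  unfolding qf_def ip_def using assms by (simp add: sum_distrib_left algebra_simps)

lemma Pos:
  assumes maxq: "\<forall>f. qf V M f \<le> L * ip V f f"
    and eig: "\<forall>x\<in>V. mop V M g x = L * g x" and x1: "x1 \<in> V" "g x1 > 0"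
  shows "\<forall>x\<in>V. g x > 0"
proof -
  define h where "h = (\<lambda>x. \<bar>g x\<bar>)"
  have "qf V M g \<le> qf V M h" unfolding qf_expand h_def
  proof (intro sum_mono)
    fix x y
    have "M x y * (g x * g y) \<le> M x y * (\<bar>g x\<bar> * \<bar>g y\<bar>)"
      using Mnn by (intro mult_left_mono) (auto simp: abs_mult[symmetric])
    thus "M x y * g x * g y \<le> M x y * \<bar>g x\<bar> * \<bar>g y\<bar>" by (simp add: mult.assoc)
  qed
  moreover have "ip V h h = ip V g g" unfolding ip_def h_def by (simp add: abs_mult[symmetric])
  moreover have "qf V M h \<le> L * ip V h h" using maxq by blast
  moreover have "L * ip V h h = L * ip V g g" using \<open>ip V h h = ip V g g\<close> by simp
  ultimately have "qf V M h = L * ip V h h" using qf_eig[OF eig] by linarith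
  hence heig: "\<forall>x\<in>V. mop V M h x = L * h x" using maximizer_eig[OF Msym fin maxq] by blast
  define p where "p = (\<lambda>x. h x + 1 * g x)"
  have peig: "\<forall>x\<in>V. mop V M p x = L * p x"
    unfolding p_def mop_lin using heig eig by (simp add: algebra_simps)
  have pnn: "\<forall>x\<in>V. p x \<ge> 0" unfolding p_def h_def by auto
  have "\<forall>x\<in>V. p x > 0"
  proof (rule ccontr)
    assume "\<not> (\<forall>x\<in>V. p x > 0)"
    then obtain x0 where "x0 \<in> V" "p x0 = 0" using pnn by force
    hence "p x1 = 0" using zero_prop[OF peig pnn] x1 by blast
    thus False using x1 unfolding p_def h_def by simp
  qed
  thus ?thesis unfolding p_def h_def by (auto simp: abs_if split: if_splits)
qed

lemma Pos2:
  assumes maxq: "\<forall>f. qf V M f \<le> L * ip V f f"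
    and eig: "\<forall>x\<in>V. mop V M g x = L * g x" and x1: "x1 \<in> V" "g x1 \<noteq> 0"
  shows "(\<forall>x\<in>V. g x > 0) \<or> (\<forall>x\<in>V. g x < 0)"
proof (cases "g x1 > 0")
  case True thus ?thesis using Pos[OF maxq eig x1(1)] by blast
next
  case False
  hence "- g x1 > 0" using x1 by simp
  moreover have "\<forall>x\<in>V. mop V M (\<lambda>x. (-1) * g x) x = L * ((-1) * g x)"
  proof -
    have "mop V M (\<lambda>x. (-1) * g x) y = (-1) * mop V M g y" for y by (rule mop_scale)
    thus ?thesis using eig by simp
  qed
  ultimately have "\<forall>x\<in>V. (-1) * g x > 0" using Pos[OF maxq _ x1(1), of "\<lambda>x. (-1) * g x"] by simp
  thus ?thesis by auto
qed

lemma orth: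
  assumes "\<forall>x\<in>V. mop V M f x = mu * f x" "\<forall>x\<in>V. mop V M g x = nu * g x" "mu \<noteq> nu"
  shows "ip V f g = 0"
proof -
  have "ip V f (mop V M g) = nu * ip V f g" unfolding ip_def using assms(2)
    by (simp add: sum_distrib_left algebra_simps)
  moreover have "ip V (mop V M f) g = mu * ip V f g" unfolding ip_def using assms(1)
    by (simp add: sum_distrib_left algebra_simps)
  ultimately have "mu * ip V f g = nu * ip V f g" using ip_sym[OF Msym] by metis
  thus ?thesis using assms(3) by simp
qed

lemma ip_lin2: "ip V (\<lambda>x. p * f x + q * g x) (\<lambda>x. r * f x + s * g x)
   = p * r * ip V f f + (p * s + q * r) * ip V f g + q * s * ip V g g"
  unfolding ip_def by (simp add: sum.distrib sum_distrib_left algebra_simps)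

end


lemma sqrt_bound:
  fixes x y z w :: real
  assumes "x \<ge> 0" "x^2 \<ge> y" "y \<ge> 0" "z \<ge> 0" "w \<le> y + z"
  shows "x \<ge> sqrt w - sqrt z"
proof -
  have "sqrt y \<le> sqrt (x^2)" using assms(2) by (simp only: real_sqrt_le_iff)
  hence "sqrt y \<le> x" using assms(1) by simp
  moreover have "sqrt w \<le> sqrt (y + z)" using assms(5) by simp
  moreover have "sqrt (y + z) \<le> sqrt y + sqrt z" using sqrt_add_le_add_sqrt assms(3,4) by blast
  ultimately show ?thesis by linarith
qed

lemma fin1:
  fixes x Q m :: real assumes "Q > 2 * m" "m \<ge> 1" "x \<ge> 0" "x^2 \<ge> 1/2 - m / (2*Q)"
  shows "x \<ge> sqrt (1/2 - m / (2 * Q^2)) - sqrt (m / (Q - m))"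
proof (rule sqrt_bound[OF assms(3,4)])
  have Q: "Q > 0" "Q - m > 0" using assms by auto
  show "0 \<le> 1/2 - m / (2*Q)" using Q assms by (simp add: field_simps)
  show "0 \<le> m / (Q - m)" using Q assms by simp
  have "m / (2*Q) \<le> m / (Q - m)" using Q assms by (intro divide_left_mono) auto
  moreover have "m / (2 * Q^2) \<ge> 0" using assms by simp
  ultimately show "1/2 - m / (2 * Q^2) \<le> 1/2 - m / (2*Q) + m / (Q - m)" by linarith
qed

lemma fin2:
  fixes x Q m :: real assumes "Q > 2 * m" "m \<ge> 1" "x \<ge> 0" "x^2 \<ge> 1/2 - m / Q"
  shows "x \<ge> sqrt (1/2 - m / (2 * Q^2)) - sqrt ((m + 1) / (Q - m - 1))"
proof (rule sqrt_bound[OF assms(3,4)])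
  have Q: "Q > 0" "Q - m - 1 > 0" using assms by auto
  show "0 \<le> 1/2 - m / Q" using Q assms by (simp add: field_simps)
  show "0 \<le> (m + 1) / (Q - m - 1)" using Q assms by simp
  have "m * (Q - m - 1) \<le> (m + 1) * Q" using Q assms by (simp add: algebra_simps)
  hence "m / Q \<le> (m + 1) / (Q - m - 1)" using Q by (simp add: divide_simps)
  moreover have "m / (2 * Q^2) \<ge> 0" using assms by simp
  ultimately show "1/2 - m / (2 * Q^2) \<le> 1/2 - m / Q + (m + 1) / (Q - m - 1)" by linarith
qed

context gs begin

lemma mop_lin2: "mop V M' (\<lambda>x. p * f x + q * g x) y = p * mop V M' f y + q * mop V M' g y"
  unfolding mop_def by (simp add: sum.distrib sum_distrib_left algebra_simps)

lemma ip_cong2: "(\<And>x. x \<in> V \<Longrightarrow> g x = g' x) \<Longrightarrow> ip V f g = ip V f g'"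
  unfolding ip_def by (intro sum.cong refl) auto

lemma ev_of: "(\<exists>x\<in>V. f x \<noteq> 0) \<Longrightarrow> (\<forall>x\<in>V. mop V M f x = lam * f x) \<Longrightarrow> is_eigenvalue V E Q a b lam"
  unfolding is_eigenvalue_def using eigvec_iff by blast

lemma nz_of_ip: "ip V f f = 1 \<Longrightarrow> \<exists>x\<in>V. f x \<noteq> 0"
  unfolding ip_def by (metis (no_types, lifting) mult_zero_left sum.neutral zero_neq_one)

lemma unit_ip: "unit_norm V f \<Longrightarrow> ip V f f = 1"
  unfolding unit_norm_def ip_def by (simp add: power2_eq_square)

lemma sum_delta2: "(\<Sum>x\<in>V. f x * (if x = y then 1 else 0)) = (if y \<in> V then f y else (0::real))"
proof -
  have "(\<Sum>x\<in>V. f x * (if x = y then 1 else 0)) = (\<Sum>x\<in>V. if x = y then f x else 0)"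
    by (intro sum.cong) auto
  thus ?thesis using fin by (simp add: sum.delta)
qed

lemma main:
  assumes Qm: "Q > 2 * real m"
    and max1: "\<forall>\<mu>. is_eigenvalue V E Q a b \<mu> \<longrightarrow> \<mu> \<le> lam1"
    and lt: "lam2 < lam1" and max2: "\<forall>\<mu>. is_eigenvalue V E Q a b \<mu> \<and> \<mu> < lam1 \<longrightarrow> \<mu> \<le> lam2"
    and v1: "is_eigenvector V E Q a b lam1 \<phi>1" "unit_norm V \<phi>1"
    and v2: "is_eigenvector V E Q a b lam2 \<phi>2" "unit_norm V \<phi>2"
    and p1: "\<phi>1 a \<ge> 0" and p2: "\<phi>2 a \<ge> 0"
  shows "\<phi>1 a \<ge> sqrt (1/2 - real m / (2 * Q\<^sup>2)) - sqrt (real m / (Q - real m))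
    \<and> \<phi>2 a \<ge> sqrt (1/2 - real m / (2 * Q\<^sup>2)) - sqrt ((real m + 1) / (Q - real m - 1))"
proof -
  have Vne: "V \<noteq> {}" using aV by auto
  have "E\<^sup>*\<^sup>* a b" using conn aV bV by blast
  then obtain y where "E a y" using ab by (auto elim: converse_rtranclpE)
  hence "y \<in> {y\<in>V. E a y}" using Ein by auto
  hence "card {y\<in>V. E a y} > 0" using fin by (auto simp: card_gt_0_iff)
  hence "degree V E a \<ge> 1" unfolding degree_def by simp
  hence m1: "real m \<ge> 1" using deg_le[OF aV] by simp
  have E1: "\<forall>x\<in>V. mop V M \<phi>1 x = lam1 * \<phi>1 x" and nz1: "\<exists>x\<in>V. \<phi>1 x \<noteq> 0"
    using v1(1) eigvec_iff by auto
  have E2: "\<forall>x\<in>V. mop V M \<phi>2 x = lam2 * \<phi>2 x" and nz2: "\<exists>x\<in>V. \<phi>2 x \<noteq> 0"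
    using v2(1) eigvec_iff by auto
  have ip1: "ip V \<phi>1 \<phi>1 = 1" and ip2: "ip V \<phi>2 \<phi>2 = 1" using v1(2) v2(2) unit_ip by auto
  obtain w where w: "ip V w w = 1" and wmax: "\<forall>f. qf V M f \<le> qf V M w * ip V f f"
    using max_exists[OF fin Vne] by blast
  have "\<forall>x\<in>V. mop V M w x = qf V M w * w x"
    using maximizer_eig[OF Msym fin wmax] w by simp
  hence "qf V M w \<le> lam1" using max1 ev_of nz_of_ip[OF w] by blast
  moreover have "lam1 \<le> qf V M w" using qf_eig[OF E1] ip1 wmax[rule_format, of \<phi>1] by simp
  ultimately have "qf V M w = lam1" by simp
  hence maxq: "\<forall>f. qf V M f \<le> lam1 * ip V f f" using wmax by simp
  define e where "e = (\<lambda>x. if x = a then 1 else (0::real))"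
  have mope: "mop V M e x = M x a" for x unfolding mop_def e_def
    using sum_delta2[of "M x" a] aV by (simp add: if_distrib cong: if_cong)
  have "qf V M e = (\<Sum>x\<in>V. M x a * (if x = a then 1 else 0))" unfolding qf_def ip_def mope
    by (simp add: e_def mult.commute)
  also have "\<dots> = M a a" using sum_delta2[of "\<lambda>x. M x a" a] aV by simp
  finally have qe: "qf V M e = Q" unfolding M_def using Eirr by simp
  have "ip V e e = 1" unfolding ip_def e_def using sum_delta2[of "\<lambda>x. if x = a then 1 else 0" a] aV by simp
  hence Qle1: "Q \<le> lam1" using maxq[rule_format, of e] qe by simp
  have pos1: "\<forall>x\<in>V. \<phi>1 x > 0"
  proof -
    obtain x1 where "x1 \<in> V" "\<phi>1 x1 \<noteq> 0" using nz1 by blast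
    from Pos2[OF maxq E1 this] show ?thesis using p1 aV by fastforce
  qed
  define \<psi> where "\<psi> = (\<lambda>x. \<phi>1 (\<sigma> x))"
  have E\<psi>: "\<forall>x\<in>V. mop V M \<psi> x = lam1 * \<psi> x"
    unfolding \<psi>_def using mop_sigma E1 sV by simp
  define d where "d = (\<lambda>x. 1 * \<phi>1 x + (-1) * \<psi> x)"
  define sp where "sp = (\<lambda>x. 1 * \<phi>1 x + 1 * \<psi> x)"
  have Ed: "\<forall>x\<in>V. mop V M d x = lam1 * d x"
    unfolding d_def mop_lin2 using E1 E\<psi> by (simp add: algebra_simps)
  have "ip V \<psi> \<psi> = ip V \<phi>1 \<phi>1" unfolding \<psi>_def by (rule ip_sigma)
  hence ipd: "ip V d sp = 0" unfolding d_def sp_def ip_lin2 by simp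
  have d0: "\<forall>x\<in>V. d x = 0"
  proof (rule ccontr)
    assume "\<not> (\<forall>x\<in>V. d x = 0)"
    then obtain x1 where x1: "x1 \<in> V" "d x1 \<noteq> 0" by blast
    have sppos: "\<forall>x\<in>V. sp x > 0" unfolding sp_def \<psi>_def using pos1 sV by (simp add: add_pos_pos)
    from Pos2[OF maxq Ed x1] show False
    proof
      assume "\<forall>x\<in>V. d x > 0"
      hence "ip V d sp > 0" unfolding ip_def using sppos fin Vne by (intro sum_pos) auto
      thus False using ipd by simp
    next
      assume "\<forall>x\<in>V. d x < 0"
      hence "(\<Sum>x\<in>V. - (d x * sp x)) > 0" using sppos fin Vne
        by (intro sum_pos) (auto simp: mult_neg_pos)
      thus False using ipd unfolding ip_def by (simp add: sum_negf)
    qed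
  qed
  hence "\<phi>1 b = \<phi>1 a" using aV unfolding d_def \<psi>_def by auto
  define c where "c = \<phi>1 a"
  have cpos: "c > 0" using pos1 aV unfolding c_def by auto
  have c1b: "\<phi>1 b = c" using \<open>\<phi>1 b = \<phi>1 a\<close> unfolding c_def .
  (* deflation *)
  define K where "K = lam1 - Q + real m + 1"
  define M' where "M' = (\<lambda>x y. M x y - K * \<phi>1 x * \<phi>1 y)"
  have Msym': "\<forall>x y. M' x y = M' y x" unfolding M'_def using Msym by (simp add: algebra_simps)
  have mop'_eq: "mop V M' f x = mop V M f x - K * \<phi>1 x * ip V \<phi>1 f" for f x
    unfolding mop_def M'_def ip_def by (simp add: sum_subtractf sum_distrib_left algebra_simps)
  have qf'_eq: "qf V M' f = qf V M f - K * (ip V \<phi>1 f)^2" for f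
  proof -
    have "qf V M' f = (\<Sum>x\<in>V. f x * mop V M f x) - K * ip V \<phi>1 f * (\<Sum>x\<in>V. f x * \<phi>1 x)"
      unfolding qf_def ip_def[of V f] mop'_eq by (simp add: sum_subtractf sum_distrib_left algebra_simps)
    thus ?thesis unfolding qf_def ip_def by (simp add: power2_eq_square algebra_simps)
  qed
  obtain v where v: "ip V v v = 1" and vmax: "\<forall>f. qf V M' f \<le> qf V M' v * ip V f f"
    using max_exists[OF fin Vne] by blast
  define \<mu> where "\<mu> = qf V M' v"
  have veig': "\<forall>x\<in>V. mop V M' v x = \<mu> * v x"
    using maximizer_eig[OF Msym' fin vmax] v unfolding \<mu>_def by simp
  define w2 where "w2 = (\<lambda>x. (if x = a then 1 else 0) - (if x = b then 1 else (0::real)))"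
  have w2a: "w2 a = 1" and w2b: "w2 b = -1" unfolding w2_def using ab by auto
  have "ip V \<phi>1 w2 = (\<Sum>x\<in>V. \<phi>1 x * (if x = a then 1 else 0)) - (\<Sum>x\<in>V. \<phi>1 x * (if x = b then 1 else 0))"
    unfolding ip_def w2_def by (simp only: right_diff_distrib sum_subtractf)
  hence "ip V \<phi>1 w2 = \<phi>1 a - \<phi>1 b" using sum_delta2[of \<phi>1 a] sum_delta2[of \<phi>1 b] aV bV by simp
  hence ipw: "ip V \<phi>1 w2 = 0" using c1b c_def by simp
  have "ip V w2 w2 = (\<Sum>x\<in>V. (if x = a then 1 else 0) + (if x = b then 1 else 0))"
    unfolding ip_def w2_def using ab by (intro sum.cong refl) auto
  hence ipw2: "ip V w2 w2 = 2" using fin aV bV by (simp add: sum.distrib)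
  have "qf V M w2 = Aq w2 + Q * 1 + Q * 1" using qf_split[of w2] w2a w2b by simp
  moreover have "Aq w2 \<ge> - (real m * 2)" using Aq_abs[of w2] ipw2 by simp
  ultimately have "qf V M' w2 \<ge> 2 * Q - 2 * real m" using qf'_eq ipw by simp
  moreover have "qf V M' w2 \<le> \<mu> * 2" using vmax[rule_format, of w2] ipw2 unfolding \<mu>_def by simp
  ultimately have muQ: "\<mu> \<ge> Q - real m" by simp
  have mop'1: "\<forall>x\<in>V. mop V M' \<phi>1 x = (lam1 - K) * \<phi>1 x"
  proof (intro ballI)
    fix x assume "x \<in> V"
    thus "mop V M' \<phi>1 x = (lam1 - K) * \<phi>1 x" using mop'_eq[of \<phi>1 x] E1 ip1 by (simp add: algebra_simps)
  qed
  have "ip V \<phi>1 (mop V M' v) = \<mu> * ip V \<phi>1 v"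
    unfolding ip_def using veig' by (simp add: sum_distrib_left algebra_simps)
  moreover have "ip V (mop V M' \<phi>1) v = (lam1 - K) * ip V \<phi>1 v"
  proof -
    have "ip V (mop V M' \<phi>1) v = (\<Sum>x\<in>V. (lam1 - K) * (\<phi>1 x * v x))"
      unfolding ip_def using mop'1 by (intro sum.cong refl) auto
    thus ?thesis by (simp add: ip_def sum_distrib_left)
  qed
  ultimately have "\<mu> * ip V \<phi>1 v = (lam1 - K) * ip V \<phi>1 v" using ip_sym[OF Msym'] by metis
  moreover have "\<mu> \<noteq> lam1 - K" using muQ unfolding K_def by simp
  ultimately have ipv: "ip V \<phi>1 v = 0" by simp
  have veig: "\<forall>x\<in>V. mop V M v x = \<mu> * v x" using veig' mop'_eq ipv by simp
  have nzv: "\<exists>x\<in>V. v x \<noteq> 0" using nz_of_ip[OF v] .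
  have "\<mu> \<le> lam1" using max1 ev_of[OF nzv veig] by blast
  moreover have "\<mu> \<noteq> lam1"
  proof
    assume "\<mu> = lam1"
    then obtain x1 where x1: "x1 \<in> V" "v x1 \<noteq> 0" and ve: "\<forall>x\<in>V. mop V M v x = lam1 * v x"
      using nzv veig by auto
    from Pos2[OF maxq ve x1] show False
    proof
      assume "\<forall>x\<in>V. v x > 0"
      hence "ip V \<phi>1 v > 0" unfolding ip_def using pos1 fin Vne by (intro sum_pos) auto
      thus False using ipv by simp
    next
      assume "\<forall>x\<in>V. v x < 0"
      hence "(\<Sum>x\<in>V. - (\<phi>1 x * v x)) > 0" using pos1 fin Vne
        by (intro sum_pos) (auto simp: mult_pos_neg)
      thus False using ipv unfolding ip_def by (simp add: sum_negf)
    qed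
  qed
  ultimately have "\<mu> \<le> lam2" using max2 ev_of[OF nzv veig] by auto
  hence lam2Q: "lam2 \<ge> Q - real m" using muQ by simp
  define \<psi>2 where "\<psi>2 = (\<lambda>x. \<phi>2 (\<sigma> x))"
  have E\<psi>2: "\<forall>x\<in>V. mop V M \<psi>2 x = lam2 * \<psi>2 x"
    unfolding \<psi>2_def using mop_sigma E2 sV by simp
  define \<xi> where "\<xi> = (\<lambda>x. 1 * \<phi>2 x + 1 * \<psi>2 x)"
  have E\<xi>: "\<forall>x\<in>V. mop V M \<xi> x = lam2 * \<xi> x"
    unfolding \<xi>_def mop_lin2 using E2 E\<psi>2 by (simp add: algebra_simps)
  define \<beta> where "\<beta> = \<phi>2 a + \<phi>2 b"
  have sb: "\<sigma> b = a" using ss aV by simp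
  have \<xi>a: "\<xi> a = \<beta>" and \<xi>b: "\<xi> b = \<beta>" unfolding \<xi>_def \<psi>2_def \<beta>_def using sb by auto
  have orth\<xi>: "ip V \<xi> \<phi>1 = 0" using orth[OF E\<xi> E1] lt by simp
  define u where "u = (\<lambda>x. c * \<xi> x + (- \<beta>) * \<phi>1 x)"
  have ua: "u a = 0" and ub: "u b = 0" unfolding u_def using \<xi>a \<xi>b c_def c1b by auto
  have mopu: "\<forall>x\<in>V. mop V M u x = (c * lam2) * \<xi> x + (- \<beta> * lam1) * \<phi>1 x"
    unfolding u_def mop_lin2 using E\<xi> E1 by simp
  have "qf V M u = ip V u (\<lambda>x. (c * lam2) * \<xi> x + (- \<beta> * lam1) * \<phi>1 x)"
    unfolding qf_def using mopu by (intro ip_cong2) auto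
  also have "\<dots> = c * (c * lam2) * ip V \<xi> \<xi> + \<beta>^2 * lam1"
    unfolding u_def ip_lin2 orth\<xi> ip1 by (simp add: power2_eq_square)
  finally have qu: "qf V M u = c^2 * lam2 * ip V \<xi> \<xi> + \<beta>^2 * lam1" by (simp add: power2_eq_square)
  have ipu: "ip V u u = c^2 * ip V \<xi> \<xi> + \<beta>^2"
    unfolding u_def ip_lin2 orth\<xi> ip1 by (simp add: power2_eq_square)
  have "qf V M u = Aq u" using qf_split[of u] ua ub by simp
  hence "qf V M u \<le> real m * ip V u u" using Aq_abs[of u] by simp
  hence ineq: "c^2 * ip V \<xi> \<xi> * (lam2 - real m) + \<beta>^2 * (lam1 - real m) \<le> 0"
    unfolding qu ipu by (simp add: algebra_simps)
  have "c^2 * ip V \<xi> \<xi> * (lam2 - real m) \<ge> 0" using lam2Q Qm ip_nonneg[of V \<xi>] by simp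
  hence "\<beta>^2 * (lam1 - real m) \<le> 0" using ineq by linarith
  moreover have "lam1 - real m > 0" using Qle1 Qm by simp
  ultimately have "\<beta>^2 \<le> 0" by (simp add: mult_le_0_iff)
  hence "\<beta> = 0" by simp
  hence \<phi>2b: "\<phi>2 b = - \<phi>2 a" unfolding \<beta>_def by simp
  have "lam1 = Aq \<phi>1 + Q * (\<phi>1 a)^2 + Q * (\<phi>1 b)^2" using qf_eig[OF E1] ip1 qf_split by simp
  moreover have "Aq \<phi>1 \<le> real m" using Aq_abs[of \<phi>1] ip1 by simp
  ultimately have "Q \<le> real m + 2 * Q * (\<phi>1 a)^2" using Qle1 \<open>\<phi>1 b = \<phi>1 a\<close> by simp
  hence "(Q - real m) / (2 * Q) \<le> (\<phi>1 a)^2" using Qpos by (simp add: pos_divide_le_eq algebra_simps)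
  moreover have "(Q - real m) / (2 * Q) = 1/2 - real m / (2 * Q)" using Qpos by (simp add: diff_divide_distrib)
  ultimately have b1: "(\<phi>1 a)^2 \<ge> 1/2 - real m / (2 * Q)" by simp
  have "lam2 = Aq \<phi>2 + Q * (\<phi>2 a)^2 + Q * (\<phi>2 b)^2" using qf_eig[OF E2] ip2 qf_split by simp
  moreover have "Aq \<phi>2 \<le> real m" using Aq_abs[of \<phi>2] ip2 by simp
  ultimately have "Q - real m \<le> real m + 2 * Q * (\<phi>2 a)^2" using lam2Q \<phi>2b by simp
  hence "(Q - 2 * real m) / (2 * Q) \<le> (\<phi>2 a)^2" using Qpos by (simp add: pos_divide_le_eq algebra_simps)
  moreover have "(Q - 2 * real m) / (2 * Q) = 1/2 - real m / Q" using Qpos by (simp add: diff_divide_distrib)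
  ultimately have b2: "(\<phi>2 a)^2 \<ge> 1/2 - real m / Q" by simp
  show ?thesis using fin1[OF Qm m1 p1 b1] fin2[OF Qm m1 p2 b2] by simp
qed

end


theorem theorem6:
  fixes V :: "'a set" and E :: "'a \<Rightarrow> 'a \<Rightarrow> bool" and \<sigma> :: "'a \<Rightarrow> 'a"
    and v1 :: 'a and Q lam1 lam2 :: real and \<phi>1 \<phi>2 :: "'a \<Rightarrow> real"
  assumes "simple_graph V E" and "connected_graph V E"
    and "graph_involution V E \<sigma>"
    and "v1 \<in> V" and "\<sigma> v1 \<noteq> v1"
    and "Q > 2 * real (max_degree V E)"
    and "is_eigenvalue V E Q v1 (\<sigma> v1) lam1"
    and "\<forall>\<mu>. is_eigenvalue V E Q v1 (\<sigma> v1) \<mu> \<longrightarrow> \<mu> \<le> lam1"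
    and "is_eigenvalue V E Q v1 (\<sigma> v1) lam2" and "lam2 < lam1"
    and "\<forall>\<mu>. is_eigenvalue V E Q v1 (\<sigma> v1) \<mu> \<and> \<mu> < lam1 \<longrightarrow> \<mu> \<le> lam2"
    and "is_eigenvector V E Q v1 (\<sigma> v1) lam1 \<phi>1" and "unit_norm V \<phi>1"
    and "is_eigenvector V E Q v1 (\<sigma> v1) lam2 \<phi>2" and "unit_norm V \<phi>2"
    and "\<phi>1 v1 \<ge> 0" and "\<phi>2 v1 \<ge> 0"
  shows "\<phi>1 v1 \<ge> sqrt (1/2 - real (max_degree V E) / (2 * Q\<^sup>2))
                    - sqrt (real (max_degree V E) / (Q - real (max_degree V E)))
    \<and> \<phi>2 v1 \<ge> sqrt (1/2 - real (max_degree V E) / (2 * Q\<^sup>2))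
                    - sqrt ((real (max_degree V E) + 1) / (Q - real (max_degree V E) - 1))"
proof -
  interpret gs V E Q v1 \<sigma>
  proof
    show "finite V" using assms(1) unfolding simple_graph_def by blast
    show "\<And>x y. E x y \<Longrightarrow> E y x" using assms(1) unfolding simple_graph_def by blast
    show "\<And>x y. E x y \<Longrightarrow> x \<in> V \<and> y \<in> V" using assms(1) unfolding simple_graph_def by blast
    show "\<And>x. \<not> E x x" using assms(1) unfolding simple_graph_def by blast
    show "v1 \<in> V" by fact
    show "\<sigma> v1 \<noteq> v1" by fact
    show "Q > 0" using assms(6) by (smt (verit) of_nat_0_le_iff)
    show "\<And>x. x \<in> V \<Longrightarrow> \<sigma> x \<in> V" using assms(3) unfolding graph_involution_def by blast
    show "\<And>x. x \<in> V \<Longrightarrow> \<sigma> (\<sigma> x) = x" using assms(3) unfolding graph_involution_def by blast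
    show "\<And>x y. x \<in> V \<Longrightarrow> y \<in> V \<Longrightarrow> E x y \<Longrightarrow> E (\<sigma> x) (\<sigma> y)"
      using assms(3) unfolding graph_involution_def by blast
    show "\<And>x y. x \<in> V \<Longrightarrow> y \<in> V \<Longrightarrow> E\<^sup>*\<^sup>* x y"
      using assms(2) unfolding connected_graph_def by blast
  qed
  show ?thesis using main[OF assms(6,8,10,11,12,13,14,15,16,17)] .
qed

end
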